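(* Let $(G,R)$ be a multirooted graph, let $c$ be a domain preserving partial colouring of $(G,R)$, and let $\Gamma$ be the stabiliser of $c$ in $\mathrm{Aut}(G,R)$. Let $A$ and $B$ be moving tuples (with respect to $c$), each with at most $3$ elements. If $A$ has an uncommon neighbour in $B$, then $B$ has an uncommon neighbour in $A$, and there is a bijection $f\colon A\to B$ such that for every $\gamma\in\Gamma$ we have $\gamma|_B = f\circ\gamma|_A\circ f^{-1}$. In particular, every $\gamma\in\Gamma$ that fixes a vertex $v\in A$ also fixes $f(v)\in B$, and vice versa.
   Context: All graphs are simple, connected and locally finite. A multirooted graph $(G,R)$ is a graph $G=(V,E)$ together with a set $R\subseteq V$ of roots; $\mathrm{Aut}(G,R)$ is the group of automorphisms of $G$ fixing every vertex of $R$. A partial colouring is a function $c$ from a set $\mathrm{dom}(c)\subseteq V$ to a set of colours. An automorphism $\gamma$ preserves $c$ if $c(v)=c(\gamma v)$ whenever both are defined; the stabiliser of $c$ is the set of $c$-preserving automorphisms in $\mathrm{Aut}(G,R)$. The colouring $c$ is domain preserving if every $c$-preserving automorphism of $(G,R)$ maps $\mathrm{dom}(c)$ onto itself (in this case the stabiliser is a group). For a domain preserving $c$: a vertex $v\in V\setminus R$ is charted if it is coloured or has a neighbour in $R$; a moving tuple is an orbit of a charted vertex under the stabiliser of $c$. A vertex $w\notin R$ is an uncommon neighbour of a moving tuple $A$ if $w$ is adjacent to some but not all members of $A$. *)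

theory Defs
  imports Main
begin

definition simple_graph :: "'a set \<Rightarrow> ('a \<Rightarrow> 'a \<Rightarrow> bool) \<Rightarrow> bool" where
  "simple_graph V E \<longleftrightarrow>
     (\<forall>u v. E u v \<longrightarrow> u \<in> V \<and> v \<in> V) \<and>
     (\<forall>u v. E u v \<longrightarrow> E v u) \<and>
     (\<forall>v. \<not> E v v)"

definition connected_graph :: "'a set \<Rightarrow> ('a \<Rightarrow> 'a \<Rightarrow> bool) \<Rightarrow> bool" where
  "connected_graph V E \<longleftrightarrow> (\<forall>u\<in>V. \<forall>v\<in>V. E\<^sup>*\<^sup>* u v)"

definition locally_finite :: "'a set \<Rightarrow> ('a \<Rightarrow> 'a \<Rightarrow> bool) \<Rightarrow> bool" where
  "locally_finite V E \<longleftrightarrow> (\<forall>v\<in>V. finite {w. E v w})"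

definition multirooted_graph :: "'a set \<Rightarrow> ('a \<Rightarrow> 'a \<Rightarrow> bool) \<Rightarrow> 'a set \<Rightarrow> bool" where
  "multirooted_graph V E R \<longleftrightarrow>
     simple_graph V E \<and> connected_graph V E \<and> locally_finite V E \<and> R \<subseteq> V"

text \<open>Aut(G,R): automorphisms of G fixing every root (identity outside V, for canonicity).\<close>
definition aut :: "'a set \<Rightarrow> ('a \<Rightarrow> 'a \<Rightarrow> bool) \<Rightarrow> 'a set \<Rightarrow> ('a \<Rightarrow> 'a) set" where
  "aut V E R = {\<gamma>. bij_betw \<gamma> V V \<and>
                   (\<forall>u\<in>V. \<forall>v\<in>V. E u v \<longleftrightarrow> E (\<gamma> u) (\<gamma> v)) \<and>
                   (\<forall>r\<in>R. \<gamma> r = r) \<and>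
                   (\<forall>x. x \<notin> V \<longrightarrow> \<gamma> x = x)}"

definition partial_colouring :: "'a set \<Rightarrow> ('a \<Rightarrow> 'c option) \<Rightarrow> bool" where
  "partial_colouring V c \<longleftrightarrow> dom c \<subseteq> V"

definition preserves :: "('a \<Rightarrow> 'a) \<Rightarrow> ('a \<Rightarrow> 'c option) \<Rightarrow> bool" where
  "preserves \<gamma> c \<longleftrightarrow> (\<forall>v. v \<in> dom c \<and> \<gamma> v \<in> dom c \<longrightarrow> c v = c (\<gamma> v))"

definition stab :: "'a set \<Rightarrow> ('a \<Rightarrow> 'a \<Rightarrow> bool) \<Rightarrow> 'a set \<Rightarrow> ('a \<Rightarrow> 'c option) \<Rightarrow> ('a \<Rightarrow> 'a) set" where
  "stab V E R c = {\<gamma> \<in> aut V E R. preserves \<gamma> c}"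

definition domain_preserving :: "'a set \<Rightarrow> ('a \<Rightarrow> 'a \<Rightarrow> bool) \<Rightarrow> 'a set \<Rightarrow> ('a \<Rightarrow> 'c option) \<Rightarrow> bool" where
  "domain_preserving V E R c \<longleftrightarrow> (\<forall>\<gamma> \<in> stab V E R c. \<gamma> ` dom c = dom c)"

definition charted :: "'a set \<Rightarrow> ('a \<Rightarrow> 'a \<Rightarrow> bool) \<Rightarrow> 'a set \<Rightarrow> ('a \<Rightarrow> 'c option) \<Rightarrow> 'a \<Rightarrow> bool" where
  "charted V E R c v \<longleftrightarrow> v \<in> V - R \<and> (v \<in> dom c \<or> (\<exists>r\<in>R. E v r))"

definition moving_tuple :: "'a set \<Rightarrow> ('a \<Rightarrow> 'a \<Rightarrow> bool) \<Rightarrow> 'a set \<Rightarrow> ('a \<Rightarrow> 'c option) \<Rightarrow> 'a set \<Rightarrow> bool" where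
  "moving_tuple V E R c A \<longleftrightarrow>
     (\<exists>v. charted V E R c v \<and> A = (\<lambda>\<gamma>. \<gamma> v) ` stab V E R c)"

definition uncommon_neighbour :: "'a set \<Rightarrow> ('a \<Rightarrow> 'a \<Rightarrow> bool) \<Rightarrow> 'a set \<Rightarrow> 'a set \<Rightarrow> 'a \<Rightarrow> bool" where
  "uncommon_neighbour V E R A w \<longleftrightarrow>
     w \<in> V \<and> w \<notin> R \<and> (\<exists>a\<in>A. E w a) \<and> \<not> (\<forall>a\<in>A. E w a)"

end

theory Submission
  imports Defs
begin

lemma dc:
  assumes "finite A" "finite B"
  shows "(\<Sum>a\<in>A. card {b\<in>B. P a b}) = (\<Sum>b\<in>B. card {a\<in>A. P a b})"
proof -
  have 1: "card {b\<in>B. P a b} = (\<Sum>b\<in>B. of_bool (P a b) :: nat)" for a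
  proof -
    have "{b\<in>B. P a b} = B \<inter> {b. P a b}" by blast
    then show ?thesis using assms(2) by simp
  qed
  have 2: "card {a\<in>A. P a b} = (\<Sum>a\<in>A. of_bool (P a b) :: nat)" for b
  proof -
    have "{a\<in>A. P a b} = A \<inter> {a. P a b}" by blast
    then show ?thesis using assms(1) by simp
  qed
  show ?thesis unfolding 1 2 by (rule sum.swap)
qed

lemma orbit_perm:
  assumes comp: "\<And>g h. g\<in>S \<Longrightarrow> h\<in>S \<Longrightarrow> g \<circ> h \<in> S"
    and injS: "\<And>g. g\<in>S \<Longrightarrow> inj_on g V"
    and mapV: "\<And>g x. g\<in>S \<Longrightarrow> x \<in> V \<Longrightarrow> g x \<in> V"
    and X: "X = (\<lambda>g. g x0) ` S" and x0: "x0 \<in> V" and fin: "finite X" and g: "g \<in> S"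
  shows "g ` X = X"
proof -
  have sub: "g ` X \<subseteq> X"
  proof
    fix y assume "y \<in> g ` X"
    then obtain h where h: "h \<in> S" "y = g (h x0)" using X by auto
    then have "y = (g \<circ> h) x0" by simp
    then show "y \<in> X" using X comp[OF g h(1)] by (auto intro!: image_eqI[where x="g \<circ> h"])
  qed
  have XV: "X \<subseteq> V" using X mapV x0 by auto
  have "inj_on g X" using injS[OF g] XV inj_on_subset by blast
  then have "card (g ` X) = card X" by (rule card_image)
  then show ?thesis using card_subset_eq[OF fin sub] by blast
qed

lemma combi:
  fixes S :: "('a\<Rightarrow>'a) set"
  assumes comp: "\<And>g h. g\<in>S \<Longrightarrow> h\<in>S \<Longrightarrow> g \<circ> h \<in> S"
    and injS: "\<And>g. g\<in>S \<Longrightarrow> inj_on g V"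
    and mapV: "\<And>g x. g\<in>S \<Longrightarrow> x \<in> V \<Longrightarrow> g x \<in> V"
    and edgeS: "\<And>g u v. g\<in>S \<Longrightarrow> u\<in>V \<Longrightarrow> v\<in>V \<Longrightarrow> E (g u) (g v) = E u v"
    and symE: "\<And>u v. E u v \<Longrightarrow> E v u"
    and Adef: "A = (\<lambda>g. g a0) ` S" and a0: "a0 \<in> V"
    and Bdef: "B = (\<lambda>g. g b0) ` S" and b0: "b0 \<in> V"
    and finA: "finite A" and finB: "finite B" and cA: "card A \<le> 3" and cB: "card B \<le> 3"
    and w: "w\<in>B" "a1\<in>A" "E w a1" "a2 \<in> A" "\<not> E w a2"
  shows "(\<forall>a\<in>A. (\<exists>b\<in>B. E a b) \<and> \<not>(\<forall>b\<in>B. E a b)) \<and>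
         (\<exists>f. bij_betw f A B \<and> (\<forall>g\<in>S. \<forall>a\<in>A. f (g a) = g (f a)))"
proof -
  have AV: "A \<subseteq> V" using Adef mapV a0 by auto
  have BV: "B \<subseteq> V" using Bdef mapV b0 by auto
  have permA: "g ` A = A" if gS: "g \<in> S" for g
    apply (rule orbit_perm[of S V A a0 g])
    apply (erule (1) comp) apply (erule injS) apply (erule (1) mapV)
    apply (rule Adef) apply (rule a0) apply (rule finA) apply (rule gS) done
  have permB: "g ` B = B" if gS: "g \<in> S" for g
    apply (rule orbit_perm[of S V B b0 g])
    apply (erule (1) comp) apply (erule injS) apply (erule (1) mapV)
    apply (rule Bdef) apply (rule b0) apply (rule finB) apply (rule gS) done
  define kA where "kA = card {b\<in>B. E a0 b}"
  define kB where "kB = card {a\<in>A. E a b0}"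
  have degA: "card {b\<in>B. E a b} = kA" if aA: "a \<in> A" for a
  proof -
    obtain g where g: "g \<in> S" "a = g a0" using aA Adef by auto
    have "{b\<in>B. E (g a0) b} = g ` {b\<in>B. E a0 b}"
    proof
      show "{b\<in>B. E (g a0) b} \<subseteq> g ` {b\<in>B. E a0 b}"
      proof
        fix b assume b: "b \<in> {b\<in>B. E (g a0) b}"
        then obtain b' where b': "b' \<in> B" "b = g b'" using permB[OF g(1)] by blast
        then have "E a0 b'" using b edgeS[OF g(1) a0, of b'] BV by auto
        then show "b \<in> g ` {b\<in>B. E a0 b}" using b' by auto
      qed
      show "g ` {b\<in>B. E a0 b} \<subseteq> {b\<in>B. E (g a0) b}"
      proof
        fix x assume "x \<in> g ` {b\<in>B. E a0 b}"
        then obtain b where b: "b \<in> B" "E a0 b" "x = g b" by blast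
        have "g b \<in> B" using permB[OF g(1)] b(1) by blast
        moreover have "E (g a0) (g b)" using edgeS[OF g(1) a0, of b] BV b by blast
        ultimately show "x \<in> {b\<in>B. E (g a0) b}" using b(3) by simp
      qed
    qed
    moreover have "inj_on g {b\<in>B. E a0 b}"
      by (rule inj_on_subset[OF injS[OF g(1)]]) (use BV in auto)
    ultimately show ?thesis unfolding kA_def g(2) by (simp add: card_image)
  qed
  have degB: "card {a\<in>A. E a b} = kB" if bB: "b \<in> B" for b
  proof -
    obtain g where g: "g \<in> S" "b = g b0" using bB Bdef by auto
    have "{a\<in>A. E a (g b0)} = g ` {a\<in>A. E a b0}"
    proof
      show "{a\<in>A. E a (g b0)} \<subseteq> g ` {a\<in>A. E a b0}"
      proof
        fix a assume a: "a \<in> {a\<in>A. E a (g b0)}"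
        then obtain a' where a': "a' \<in> A" "a = g a'" using permA[OF g(1)] by blast
        then have "E a' b0" using a edgeS[OF g(1) _ b0, of a'] AV by auto
        then show "a \<in> g ` {a\<in>A. E a b0}" using a' by auto
      qed
      show "g ` {a\<in>A. E a b0} \<subseteq> {a\<in>A. E a (g b0)}"
      proof
        fix x assume "x \<in> g ` {a\<in>A. E a b0}"
        then obtain a where a: "a \<in> A" "E a b0" "x = g a" by blast
        have "g a \<in> A" using permA[OF g(1)] a(1) by blast
        moreover have "E (g a) (g b0)" using edgeS[OF g(1) _ b0, of a] AV a by blast
        ultimately show "x \<in> {a\<in>A. E a (g b0)}" using a(3) by simp
      qed
    qed
    moreover have "inj_on g {a\<in>A. E a b0}"
      by (rule inj_on_subset[OF injS[OF g(1)]]) (use AV in auto)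
    ultimately show ?thesis unfolding kB_def g(2) by (simp add: card_image)
  qed
  have eq: "card A * kA = card B * kB"
  proof -
    have "(\<Sum>a\<in>A. card {b\<in>B. E a b}) = (\<Sum>a\<in>A. kA)" by (rule sum.cong) (simp_all add: degA)
    then have 1: "(\<Sum>a\<in>A. card {b\<in>B. E a b}) = card A * kA" by simp
    have "(\<Sum>b\<in>B. card {a\<in>A. E a b}) = (\<Sum>b\<in>B. kB)" by (rule sum.cong) (simp_all add: degB)
    then have 2: "(\<Sum>b\<in>B. card {a\<in>A. E a b}) = card B * kB" by simp
    note 1 moreover note 2
    ultimately show ?thesis using dc[OF finA finB, of E] by linarith
  qed
  have e1: "E a1 w" using symE[OF w(3)] .
  have e2: "\<not> E a2 w"
  proof
    assume "E a2 w"
    from symE[OF this] w(5) show False by contradiction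
  qed
  have "a1 \<in> {a\<in>A. E a w}" using w(2) e1 by simp
  then have "{a\<in>A. E a w} \<noteq> {}" by blast
  moreover have "finite {a\<in>A. E a w}" using finA by simp
  ultimately have "card {a\<in>A. E a w} > 0" using card_gt_0_iff by blast
  then have kB0: "kB > 0" using degB[OF w(1)] by simp
  have "{a\<in>A. E a w} \<subset> A" using w(4) e2 by blast
  then have "card {a\<in>A. E a w} < card A" by (rule psubset_card_mono[OF finA])
  then have kBA: "kB < card A" using degB[OF w(1)] by simp
  have "w \<in> {b\<in>B. E a1 b}" using w(1) e1 by simp
  then have "{b\<in>B. E a1 b} \<noteq> {}" by blast
  moreover have "finite {b\<in>B. E a1 b}" using finB by simp
  ultimately have "card {b\<in>B. E a1 b} > 0" using card_gt_0_iff by blast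
  then have kA0: "kA > 0" using degA[OF w(2)] by simp
  have kAB: "kA < card B"
  proof (rule ccontr)
    assume "\<not> kA < card B"
    moreover have "{b\<in>B. E a1 b} \<subseteq> B" by blast
    then have "card {b\<in>B. E a1 b} \<le> card B" by (rule card_mono[OF finB])
    then have "kA \<le> card B" using degA[OF w(2)] by simp
    ultimately have "card {b\<in>B. E a2 b} = card B" using degA[OF w(4)] by simp
    then have "{b\<in>B. E a2 b} = B" by (intro card_subset_eq[OF finB]) auto
    then have "E a2 w" using w(1) by blast
    then show False using e2 by blast
  qed
  have arith: "card A = card B \<and> kA = kB \<and> (kA = 1 \<or> (kA = 2 \<and> card B = 3))"
  proof -
    have "card A \<in> {2,3}" "card B \<in> {2,3}" "kA \<in> {1,2}" "kB \<in> {1,2}"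
      using kB0 kBA kA0 kAB cA cB by auto
    then show ?thesis using eq kAB kBA by auto
  qed
  define P where "P a b = (E a b = (kA = 1))" for a b
  have oneA: "card {b\<in>B. P a b} = 1" if "a \<in> A" for a
  proof (cases "kA = 1")
    case True then show ?thesis using degA[OF that] unfolding P_def by simp
  next
    case False
    then have k: "kA = 2" "card B = 3" using arith by auto
    have "{b\<in>B. P a b} = B - {b\<in>B. E a b}" unfolding P_def using False by auto
    then have "card {b\<in>B. P a b} = card B - card {b\<in>B. E a b}"
      using finB by (simp add: card_Diff_subset)
    then show ?thesis using k degA[OF that] by simp
  qed
  have oneB: "card {a\<in>A. P a b} = 1" if "b \<in> B" for b
  proof (cases "kA = 1")
    case True then show ?thesis using degB[OF that] arith unfolding P_def by simp
  next
    case False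
    then have k: "kB = 2" "card A = 3" using arith by auto
    have "{a\<in>A. P a b} = A - {a\<in>A. E a b}" unfolding P_def using False by auto
    then have "card {a\<in>A. P a b} = card A - card {a\<in>A. E a b}"
      using finA by (simp add: card_Diff_subset)
    then show ?thesis using k degB[OF that] by simp
  qed
  define f where "f a = (THE b. b \<in> B \<and> P a b)" for a
  have fprop: "f a \<in> B \<and> P a (f a) \<and> (\<forall>b. b \<in> B \<and> P a b \<longrightarrow> b = f a)" if aA: "a \<in> A" for a
  proof -
    obtain x where x: "{b\<in>B. P a b} = {x}" using oneA[OF aA] card_1_singletonE by blast
    then have "f a = x" unfolding f_def by (intro the_equality) auto
    then show ?thesis using x by auto
  qed
  have inj: "inj_on f A"
  proof (rule inj_onI)
    fix a a' assume a: "a \<in> A" "a' \<in> A" "f a = f a'"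
    obtain x where x: "{c\<in>A. P c (f a)} = {x}" using oneB fprop[OF a(1)] card_1_singletonE by metis
    have "P a (f a)" "P a' (f a')" using fprop a(1,2) by auto
    then have "a \<in> {c\<in>A. P c (f a)}" "a' \<in> {c\<in>A. P c (f a)}" using a by auto
    then show "a = a'" using x by auto
  qed
  have "f ` A \<subseteq> B" using fprop by auto
  moreover have "card (f ` A) = card B" using card_image[OF inj] arith by simp
  ultimately have "f ` A = B" using card_subset_eq[OF finB] by blast
  then have bij: "bij_betw f A B" using inj by (simp add: bij_betw_def)
  have equi: "f (g a) = g (f a)" if g: "g \<in> S" and a: "a \<in> A" for g a
  proof -
    have ga: "g a \<in> A" using permA[OF g] a by blast
    have gfa: "g (f a) \<in> B" using permB[OF g] fprop[OF a] by blast
    have "a \<in> V" "f a \<in> V" using AV BV a fprop[OF a] by auto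
    then have "P (g a) (g (f a))" using fprop[OF a] edgeS[OF g] unfolding P_def by simp
    then show ?thesis using fprop[OF ga] gfa by auto
  qed
  have first: "\<forall>a\<in>A. (\<exists>b\<in>B. E a b) \<and> \<not>(\<forall>b\<in>B. E a b)"
  proof
    fix a assume a: "a \<in> A"
    have "{b\<in>B. E a b} \<noteq> {}" using degA[OF a] kA0 by (metis card.empty less_irrefl)
    moreover have "{b\<in>B. E a b} \<noteq> B" using degA[OF a] kAB by auto
    ultimately show "(\<exists>b\<in>B. E a b) \<and> \<not>(\<forall>b\<in>B. E a b)" by auto
  qed
  show ?thesis using first bij equi by blast
qed

theorem lemma3p1:
  fixes V :: "'a set" and E :: "'a \<Rightarrow> 'a \<Rightarrow> bool" and R :: "'a set"
    and c :: "'a \<Rightarrow> 'c option" and A B :: "'a set"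
  assumes "multirooted_graph V E R"
    and "partial_colouring V c"
    and "domain_preserving V E R c"
    and "moving_tuple V E R c A" and "finite A" and "card A \<le> 3"
    and "moving_tuple V E R c B" and "finite B" and "card B \<le> 3"
    and "\<exists>w\<in>B. uncommon_neighbour V E R A w"
  shows "(\<exists>w\<in>A. uncommon_neighbour V E R B w) \<and>
         (\<exists>f. bij_betw f A B \<and>
              (\<forall>\<gamma>\<in>stab V E R c. \<forall>b\<in>B. \<gamma> b = f (\<gamma> (the_inv_into A f b))) \<and>
              (\<forall>\<gamma>\<in>stab V E R c. \<forall>v\<in>A. \<gamma> v = v \<longleftrightarrow> \<gamma> (f v) = f v))"
proof -
  let ?S = "stab V E R c"
  have mg: "simple_graph V E" "R \<subseteq> V" using assms(1) unfolding multirooted_graph_def by auto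
  have symE: "\<And>u v. E u v \<Longrightarrow> E v u" using mg(1) unfolding simple_graph_def by blast
  have dp: "\<And>g. g \<in> ?S \<Longrightarrow> g ` dom c = dom c" using assms(3) unfolding domain_preserving_def by blast
  have injS: "\<And>g. g \<in> ?S \<Longrightarrow> inj_on g V"
    unfolding stab_def aut_def bij_betw_def by auto
  have mapV: "\<And>g x. g \<in> ?S \<Longrightarrow> x \<in> V \<Longrightarrow> g x \<in> V"
    unfolding stab_def aut_def bij_betw_def by auto
  have edgeS: "\<And>g u v. g \<in> ?S \<Longrightarrow> u\<in>V \<Longrightarrow> v\<in>V \<Longrightarrow> E (g u) (g v) = E u v"
    unfolding stab_def aut_def by auto
  have rootS: "\<And>g r. g \<in> ?S \<Longrightarrow> r \<in> R \<Longrightarrow> g r = r"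
    unfolding stab_def aut_def by auto
  have comp: "g \<circ> h \<in> ?S" if g: "g \<in> ?S" and h: "h \<in> ?S" for g h
  proof -
    have ga: "g \<in> aut V E R" "preserves g c" and ha: "h \<in> aut V E R" "preserves h c"
      using g h unfolding stab_def by auto
    have "bij_betw (g \<circ> h) V V" using ga ha unfolding aut_def using bij_betw_trans by blast
    moreover have "\<forall>u\<in>V. \<forall>v\<in>V. E u v \<longleftrightarrow> E ((g\<circ>h) u) ((g\<circ>h) v)"
      using edgeS[OF g] edgeS[OF h] mapV[OF h] by auto
    moreover have "\<forall>r\<in>R. (g\<circ>h) r = r" using rootS[OF g] rootS[OF h] by auto
    moreover have "\<forall>x. x \<notin> V \<longrightarrow> (g\<circ>h) x = x" using ga ha unfolding aut_def by auto
    ultimately have "g \<circ> h \<in> aut V E R" unfolding aut_def by blast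
    moreover have "preserves (g \<circ> h) c"
      unfolding preserves_def
    proof (intro allI impI)
      fix v assume v: "v \<in> dom c \<and> (g \<circ> h) v \<in> dom c"
      have hv: "h v \<in> dom c" using dp[OF h] v by blast
      have "c v = c (h v)" using ha(2) v hv unfolding preserves_def by blast
      also have "\<dots> = c (g (h v))" using ga(2) v hv unfolding preserves_def by auto
      finally show "c v = c ((g \<circ> h) v)" by simp
    qed
    ultimately show ?thesis unfolding stab_def by blast
  qed
  obtain a0 where a0: "charted V E R c a0" "A = (\<lambda>g. g a0) ` ?S"
    using assms(4) unfolding moving_tuple_def by blast
  obtain b0 where b0: "charted V E R c b0" "B = (\<lambda>g. g b0) ` ?S"
    using assms(7) unfolding moving_tuple_def by blast
  have a0V: "a0 \<in> V - R" and b0V: "b0 \<in> V - R" using a0 b0 unfolding charted_def by auto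
  have orbR: "g x \<in> V - R" if "g \<in> ?S" "x \<in> V - R" for g x
  proof -
    have "g x \<in> V" using mapV that by auto
    moreover have "g x \<notin> R"
    proof
      assume r: "g x \<in> R"
      then have "g (g x) = g x" using rootS[OF that(1)] by auto
      then have "g x = x" using injS[OF that(1)] mapV[OF that(1)] that(2) mg(2) r
        by (meson DiffD1 inj_onD subsetD)
      then show False using r that(2) by auto
    qed
    ultimately show ?thesis by blast
  qed
  have AVR: "A \<subseteq> V - R" using a0(2) orbR a0V by auto
  obtain w a1 a2 where w: "w\<in>B" "a1\<in>A" "E w a1" "a2 \<in> A" "\<not> E w a2"
    using assms(10) unfolding uncommon_neighbour_def by blast
  have C: "(\<forall>a\<in>A. (\<exists>b\<in>B. E a b) \<and> \<not>(\<forall>b\<in>B. E a b)) \<and>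
         (\<exists>f. bij_betw f A B \<and> (\<forall>g\<in>?S. \<forall>a\<in>A. f (g a) = g (f a)))"
    apply (rule combi[of "?S" V E A a0 B b0 w a1 a2])
    apply (erule (1) comp) apply (erule injS) apply (erule (1) mapV)
    apply (erule (2) edgeS) apply (erule symE) apply (rule a0(2))
    using a0V apply blast apply (rule b0(2)) using b0V apply blast
    apply (rule assms(5)) apply (rule assms(8)) apply (rule assms(6)) apply (rule assms(9))
    apply (rule w(1)) apply (rule w(2)) apply (rule w(3)) apply (rule w(4)) apply (rule w(5))
    done
  then obtain f where f: "bij_betw f A B" "\<And>g a. g\<in>?S \<Longrightarrow> a\<in>A \<Longrightarrow> f (g a) = g (f a)" by blast
  have first: "\<exists>w\<in>A. uncommon_neighbour V E R B w"
    using C w(2) AVR unfolding uncommon_neighbour_def by blast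
  have permA: "g ` A = A" if gS: "g \<in> ?S" for g
    apply (rule orbit_perm[of ?S V A a0 g])
    apply (erule (1) comp) apply (erule injS) apply (erule (1) mapV)
    apply (rule a0(2)) using a0V apply blast apply (rule assms(5)) apply (rule gS) done
  have injf: "inj_on f A" using f(1) bij_betw_def by blast
  have P2: "\<forall>\<gamma>\<in>?S. \<forall>b\<in>B. \<gamma> b = f (\<gamma> (the_inv_into A f b))"
  proof (intro ballI)
    fix g b assume g: "g \<in> ?S" and b: "b \<in> B"
    obtain a where a: "a \<in> A" "b = f a" using f(1) b unfolding bij_betw_def by auto
    have "the_inv_into A f b = a" using a the_inv_into_f_f[OF injf] by simp
    then show "g b = f (g (the_inv_into A f b))" using f(2)[OF g a(1)] a by simp
  qed
  have P3: "\<forall>\<gamma>\<in>?S. \<forall>v\<in>A. \<gamma> v = v \<longleftrightarrow> \<gamma> (f v) = f v"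
  proof (intro ballI)
    fix g v assume g: "g \<in> ?S" and v: "v \<in> A"
    have gv: "g v \<in> A" using permA[OF g] v by blast
    show "g v = v \<longleftrightarrow> g (f v) = f v"
      using f(2)[OF g v] injf gv v by (metis inj_onD)
  qed
  show ?thesis using first f(1) P2 P3 by blast
qed

end
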